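(* Let $\mathcal{X}$ and $\mathcal{Y}$ be finite additive groups, let $n,m\ge 1$, and let $F:\mathcal{X}^n\to\mathcal{Y}^m$ be a random function (a random variable taking values in the set of all maps $\mathcal{X}^n\to\mathcal{Y}^m$). Let $\Sigma_n$ and $\Sigma_m$ be uniformly distributed random permutations of the $n$ coordinates of $\mathcal{X}^n$ and of the $m$ coordinates of $\mathcal{Y}^m$, respectively, with $\Sigma_n$, $\Sigma_m$, $F$ mutually independent, and set $\tilde F=\Sigma_m\circ F\circ\Sigma_n$. Then for every $\mathbf{x}\in\mathcal{X}^n$ and $\mathbf{y}\in\mathcal{Y}^m$, $$\Pr\{\tilde F(\mathbf{x})=\mathbf{y}\}=|\mathcal{Y}|^{-m}\,\alpha(F)(P_{\mathbf{x}},P_{\mathbf{y}}).$$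
   Context: For a sequence $\mathbf{x}\in\mathcal{X}^n$, its type $P_{\mathbf{x}}$ is the distribution on $\mathcal{X}$ given by $P_{\mathbf{x}}(a)=N(a|\mathbf{x})/n$, where $N(a|\mathbf{x})$ is the number of occurrences of $a$ in $\mathbf{x}$; $\mathcal{P}_n(\mathcal{X})$ denotes the set of types of sequences in $\mathcal{X}^n$ (similarly for $\mathcal{Y}^m$). A permutation of coordinates acts on $\mathcal{X}^n$ by permuting the entries of a sequence. For a (deterministic) map $f:\mathcal{X}^n\to\mathcal{Y}^m$, its joint spectrum is $S_{\mathcal{X}\mathcal{Y}}(f)(P,Q)=|\{\mathbf{x}\in\mathcal{X}^n: P_{\mathbf{x}}=P,\ P_{f(\mathbf{x})}=Q\}|/|\mathcal{X}|^n$. For $P\in\mathcal{P}_n(\mathcal{X})$, $Q\in\mathcal{P}_m(\mathcal{Y})$, set $\binom{n}{nP}=n!/\prod_{a\in\mathcal{X}}(nP(a))!$, $\binom{m}{mQ}=m!/\prod_{b\in\mathcal{Y}}(mQ(b))!$, and for a random map $F$ define $$\alpha(F)(P,Q)=\frac{E[S_{\mathcal{X}\mathcal{Y}}(F)(P,Q)]}{\binom{n}{nP}\binom{m}{mQ}\,|\mathcal{X}|^{-n}|\mathcal{Y}|^{-m}}.$$ *)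

theory Defs
  imports "HOL-Probability.Probability" "HOL-Combinatorics.Permutations"
begin

definition seq_type :: "'a list \<Rightarrow> 'a \<Rightarrow> real" where
  "seq_type xs a = real (count_list xs a) / real (length xs)"

definition joint_spectrum ::
  "nat \<Rightarrow> ('a::finite list \<Rightarrow> 'b list) \<Rightarrow> ('a \<Rightarrow> real) \<Rightarrow> ('b \<Rightarrow> real) \<Rightarrow> real" where
  "joint_spectrum n f P Q =
     real (card {x. length x = n \<and> seq_type x = P \<and> seq_type (f x) = Q}) / real CARD('a) ^ n"

definition type_multinomial :: "nat \<Rightarrow> ('a::finite \<Rightarrow> real) \<Rightarrow> real" where
  "type_multinomial n P = fact n / (\<Prod>a\<in>UNIV. fact (nat \<lfloor>real n * P a\<rfloor>))"

definition alpha ::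
  "nat \<Rightarrow> nat \<Rightarrow> ('a::finite list \<Rightarrow> 'b::finite list) pmf \<Rightarrow> ('a \<Rightarrow> real) \<Rightarrow> ('b \<Rightarrow> real) \<Rightarrow> real" where
  "alpha n m F P Q =
     measure_pmf.expectation F (\<lambda>f. joint_spectrum n f P Q) /
     (type_multinomial n P * type_multinomial m Q *
      (1 / real CARD('a) ^ n) * (1 / real CARD('b) ^ m))"

definition unif_perm :: "nat \<Rightarrow> (nat \<Rightarrow> nat) pmf" where
  "unif_perm n = pmf_of_set {\<sigma>. \<sigma> permutes {..<n}}"

definition permuted_random_map ::
  "nat \<Rightarrow> nat \<Rightarrow> ('a list \<Rightarrow> 'b list) pmf \<Rightarrow> ('a list \<Rightarrow> 'b list) pmf" where
  "permuted_random_map n m F =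
     do { \<sigma> \<leftarrow> unif_perm n; \<tau> \<leftarrow> unif_perm m; f \<leftarrow> F;
          return_pmf (\<lambda>x. permute_list \<tau> (f (permute_list \<sigma> x))) }"

end

theory Submission imports Defs "HOL-Combinatorics.Multiset_Permutations"
begin

lemma permute_list_inj:
  assumes "p permutes {..<n}" "length a = n" "length b = n"
    and "permute_list p a = permute_list p b"
  shows "a = b"
proof -
  have "permute_list (inv p) (permute_list p a) = a"
    using assms by (metis permute_list_compose permute_list_id permutes_inv permutes_inv_o(1))
  moreover have "permute_list (inv p) (permute_list p b) = b"
    using assms by (metis permute_list_compose permute_list_id permutes_inv permutes_inv_o(1))
  ultimately show ?thesis using assms(4) by metis
qed

lemma fiber_card:
  assumes "length xs = n" "z \<in> permutations_of_multiset (mset xs)"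
  shows "card {\<sigma>. \<sigma> permutes {..<n} \<and> permute_list \<sigma> xs = z}
       = card {\<rho>. \<rho> permutes {..<n} \<and> permute_list \<rho> xs = xs}"
proof -
  from assms have "mset z = mset xs" by (simp add: permutations_of_multisetD)
  then obtain \<pi> where pi: "\<pi> permutes {..<n}" "permute_list \<pi> xs = z"
    using mset_eq_permutation[of z xs] assms(1) by metis
  have lz: "length z = n" using pi assms by auto
  have eq: "{\<sigma>. \<sigma> permutes {..<n} \<and> permute_list \<sigma> xs = z}
       = (\<lambda>\<rho>. \<rho> \<circ> \<pi>) ` {\<rho>. \<rho> permutes {..<n} \<and> permute_list \<rho> xs = xs}"
  proof (intro equalityI subsetI)
    fix \<sigma> assume "\<sigma> \<in> {\<sigma>. \<sigma> permutes {..<n} \<and> permute_list \<sigma> xs = z}"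
    hence s: "\<sigma> permutes {..<n}" "permute_list \<sigma> xs = z" by auto
    define \<rho> where "\<rho> = \<sigma> \<circ> inv \<pi>"
    have r1: "\<rho> permutes {..<n}" unfolding \<rho>_def using s pi by (simp add: permutes_compose permutes_inv)
    have r2: "\<rho> \<circ> \<pi> = \<sigma>" unfolding \<rho>_def using pi
      by (metis comp_assoc comp_id permutes_inv_o(2))
    have "permute_list \<pi> (permute_list \<rho> xs) = permute_list \<pi> xs"
      using permute_list_compose[of \<pi> xs \<rho>] pi assms r2 s by simp
    hence "permute_list \<rho> xs = xs"
      using permute_list_inj[OF pi(1), of "permute_list \<rho> xs" xs] assms by simp
    thus "\<sigma> \<in> (\<lambda>\<rho>. \<rho> \<circ> \<pi>) ` {\<rho>. \<rho> permutes {..<n} \<and> permute_list \<rho> xs = xs}"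
      using r1 r2 by force
  next
    fix \<sigma> assume "\<sigma> \<in> (\<lambda>\<rho>. \<rho> \<circ> \<pi>) ` {\<rho>. \<rho> permutes {..<n} \<and> permute_list \<rho> xs = xs}"
    then obtain \<rho> where r: "\<rho> permutes {..<n}" "permute_list \<rho> xs = xs" "\<sigma> = \<rho> \<circ> \<pi>" by auto
    have "\<sigma> permutes {..<n}" using r pi by (simp add: permutes_compose)
    moreover have "permute_list \<sigma> xs = z"
      using r pi assms permute_list_compose[of \<pi> xs \<rho>] by simp
    ultimately show "\<sigma> \<in> {\<sigma>. \<sigma> permutes {..<n} \<and> permute_list \<sigma> xs = z}" by simp
  qed
  have inj: "inj_on (\<lambda>\<rho>. \<rho> \<circ> \<pi>) {\<rho>. \<rho> permutes {..<n} \<and> permute_list \<rho> xs = xs}"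
  proof (rule inj_onI)
    fix a b assume "a \<circ> \<pi> = b \<circ> \<pi>"
    hence "a \<circ> \<pi> \<circ> inv \<pi> = b \<circ> \<pi> \<circ> inv \<pi>" by simp
    thus "a = b" using pi by (metis comp_assoc comp_id permutes_inv_o(1))
  qed
  show ?thesis unfolding eq using card_image[OF inj] .
qed

lemma map_perm_unif:
  assumes "length xs = n"
  shows "map_pmf (\<lambda>\<sigma>. permute_list \<sigma> xs) (unif_perm n) = pmf_of_set (permutations_of_multiset (mset xs))"
proof -
  define S where "S = {\<sigma>. \<sigma> permutes {..<n}}"
  define C where "C = permutations_of_multiset (mset xs)"
  define k where "k = card {\<rho>. \<rho> permutes {..<n} \<and> permute_list \<rho> xs = xs}"
  have fS: "finite S" "S \<noteq> {}" unfolding S_def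
    using finite_permutations[of "{..<n}"] permutes_id[of "{..<n}"] by blast+
  have fC: "finite C" "C \<noteq> {}" unfolding C_def by auto
  define p where "p = map_pmf (\<lambda>\<sigma>. permute_list \<sigma> xs) (unif_perm n)"
  have pv: "pmf p z = (if z \<in> C then real k else 0) / card S" for z
  proof -
    have "pmf p z = card (S \<inter> (\<lambda>\<sigma>. permute_list \<sigma> xs) -` {z}) / card S"
      unfolding p_def pmf_map unif_perm_def S_def[symmetric]
      using fS by (simp add: measure_pmf_of_set)
    also have "S \<inter> (\<lambda>\<sigma>. permute_list \<sigma> xs) -` {z} = {\<sigma>. \<sigma> permutes {..<n} \<and> permute_list \<sigma> xs = z}"
      unfolding S_def by auto
    also have "card \<dots> = (if z \<in> C then k else 0)"
    proof (cases "z \<in> C")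
      case True thus ?thesis using fiber_card[OF assms] unfolding C_def k_def by simp
    next
      case False
      have "{\<sigma>. \<sigma> permutes {..<n} \<and> permute_list \<sigma> xs = z} = {}"
        using False assms unfolding C_def by (auto intro: permutations_of_multisetI)
      thus ?thesis using False by (simp only: card.empty if_False)
    qed
    finally show ?thesis by simp
  qed
  have supp: "set_pmf p \<subseteq> C" using pv by (auto simp: set_pmf_eq)
  have "1 = (\<Sum>z\<in>C. pmf p z)" using sum_pmf_eq_1[OF fC(1) supp] by simp
  also have "\<dots> = card C * (real k / card S)" using pv by simp
  finally have k1: "1 = card C * (real k / card S)" .
  have cpos: "real (card C) > 0" using fC by (simp add: card_gt_0_iff)
  have kk: "real k / card S = 1 / card C"
  proof -
    have "real k / card S * card C = 1" using k1 by (metis mult.commute)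
    thus ?thesis using cpos by (metis eq_divide_eq less_irrefl)
  qed
  show ?thesis
    unfolding p_def[symmetric] C_def[symmetric]
    by (rule pmf_eqI) (use fC kk in \<open>simp add: pv indicator_def\<close>)
qed


lemma seq_type_eq_iff:
  assumes "length z = n" "length x = n" "n \<ge> 1"
  shows "seq_type z = seq_type x \<longleftrightarrow> mset z = mset x"
proof -
  have "seq_type z = seq_type x \<longleftrightarrow> (\<forall>a. count_list z a = count_list x a)"
    using assms unfolding seq_type_def fun_eq_iff by (auto simp: divide_cancel_right)
  also have "\<dots> \<longleftrightarrow> mset z = mset x" by (simp add: multiset_eq_iff count_mset)
  finally show ?thesis .
qed

lemma type_multinomial_eq:
  fixes x :: "'a::finite list"
  assumes "length x = n" "n \<ge> 1"
  shows "type_multinomial n (seq_type x) = real (card (permutations_of_multiset (mset x)))"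
proof -
  have nz: "real n \<noteq> 0" using assms by simp
  have "(\<Prod>a\<in>UNIV. fact (nat \<lfloor>real n * seq_type x a\<rfloor>) :: real)
        = (\<Prod>a\<in>UNIV. fact (count (mset x) a))"
    using nz assms by (simp add: seq_type_def count_mset)
  also have "\<dots> = (\<Prod>a\<in>set_mset (mset x). fact (count (mset x) a))"
    by (rule prod.mono_neutral_right) (auto simp: not_in_iff count_mset count_list_0_iff)
  also have "\<dots> = real (\<Prod>a\<in>set_mset (mset x). fact (count (mset x) a))"
    by (simp add: of_nat_prod)
  finally have p: "(\<Prod>a\<in>UNIV. fact (nat \<lfloor>real n * seq_type x a\<rfloor>) :: real)
        = real (\<Prod>a\<in>set_mset (mset x). fact (count (mset x) a))" .
  have aux: "real (card (permutations_of_multiset (mset x))) * real (\<Prod>a\<in>set_mset (mset x). fact (count (mset x) a)) = fact n"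
    using card_permutations_of_multiset_aux[of "mset x"] assms
    by (metis of_nat_fact of_nat_mult size_mset)
  have pnz: "real (\<Prod>a\<in>set_mset (mset x). fact (count (mset x) a)) \<noteq> 0"
    by (simp add: prod_zero_iff)
  show ?thesis unfolding type_multinomial_def p using aux pnz
    by (simp add: field_simps)
qed


theorem proposition3:
  fixes F :: "('a::{finite,group_add} list \<Rightarrow> 'b::{finite,group_add} list) pmf"
    and n m :: nat and x :: "'a list" and y :: "'b list"
  assumes "n \<ge> 1" and "m \<ge> 1"
    and "\<forall>f\<in>set_pmf F. \<forall>z. length z = n \<longrightarrow> length (f z) = m"
    and "length x = n" and "length y = m"
  shows "measure_pmf.prob (permuted_random_map n m F) {g. g x = y}
         = (1 / real CARD('b) ^ m) * alpha n m F (seq_type x) (seq_type y)"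
proof -
  note hF = assms(3)
  define Cx where "Cx = permutations_of_multiset (mset x)"
  define Cy where "Cy = permutations_of_multiset (mset y)"
  define A where "A = (\<lambda>f::'a list \<Rightarrow> 'b list. {z \<in> Cx. mset (f z) = mset y})"
  define G where "G = (\<lambda>f::'a list \<Rightarrow> 'b list. pmf_of_set Cx \<bind> (\<lambda>z. pmf_of_set (permutations_of_multiset (mset (f z)))))"
  have fCx: "finite Cx" "Cx \<noteq> {}" unfolding Cx_def by auto
  have fCy: "finite Cy" "Cy \<noteq> {}" unfolding Cy_def by auto
  have lenCx: "z \<in> Cx \<Longrightarrow> length z = n" for z
    unfolding Cx_def using assms(4) by (metis permutations_of_multisetD size_mset)
  have step1: "measure_pmf.prob (permuted_random_map n m F) {g. g x = y}
      = pmf (map_pmf (\<lambda>g. g x) (permuted_random_map n m F)) y"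
    by (simp add: pmf_map vimage_def)
  have step2: "map_pmf (\<lambda>g. g x) (permuted_random_map n m F)
     = unif_perm n \<bind> (\<lambda>\<sigma>. unif_perm m \<bind> (\<lambda>\<tau>. F \<bind> (\<lambda>f. return_pmf (permute_list \<tau> (f (permute_list \<sigma> x))))))"
    by (simp add: permuted_random_map_def map_bind_pmf map_return_pmf)
  also have "\<dots> = unif_perm n \<bind> (\<lambda>\<sigma>. F \<bind> (\<lambda>f. unif_perm m \<bind> (\<lambda>\<tau>. return_pmf (permute_list \<tau> (f (permute_list \<sigma> x))))))"
    by (subst bind_commute_pmf) (rule refl)
  also have "\<dots> = F \<bind> (\<lambda>f. unif_perm n \<bind> (\<lambda>\<sigma>. unif_perm m \<bind> (\<lambda>\<tau>. return_pmf (permute_list \<tau> (f (permute_list \<sigma> x))))))"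
    by (rule bind_commute_pmf)
  also have "\<dots> = F \<bind> G"
  proof (rule bind_pmf_cong[OF refl])
    fix f assume f: "f \<in> set_pmf F"
    have "unif_perm n \<bind> (\<lambda>\<sigma>. unif_perm m \<bind> (\<lambda>\<tau>. return_pmf (permute_list \<tau> (f (permute_list \<sigma> x)))))
        = map_pmf (\<lambda>\<sigma>. permute_list \<sigma> x) (unif_perm n) \<bind> (\<lambda>z. map_pmf (\<lambda>\<tau>. permute_list \<tau> (f z)) (unif_perm m))"
      unfolding bind_map_pmf by (simp add: map_pmf_def)
    also have "\<dots> = pmf_of_set Cx \<bind> (\<lambda>z. map_pmf (\<lambda>\<tau>. permute_list \<tau> (f z)) (unif_perm m))"
      unfolding Cx_def using map_perm_unif[OF assms(4)] by simp
    also have "\<dots> = G f" unfolding G_def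
    proof (rule bind_pmf_cong[OF refl])
      fix z assume "z \<in> set_pmf (pmf_of_set Cx)"
      hence "length z = n" using fCx lenCx by simp
      hence "length (f z) = m" using hF f by blast
      thus "map_pmf (\<lambda>\<tau>. permute_list \<tau> (f z)) (unif_perm m) = pmf_of_set (permutations_of_multiset (mset (f z)))"
        by (rule map_perm_unif)
    qed
    finally show "unif_perm n \<bind> (\<lambda>\<sigma>. unif_perm m \<bind> (\<lambda>\<tau>. return_pmf (permute_list \<tau> (f (permute_list \<sigma> x))))) = G f" .
  qed
  finally have step2': "map_pmf (\<lambda>g. g x) (permuted_random_map n m F) = F \<bind> G" .
  have pG: "pmf (G f) y = real (card (A f)) / (real (card Cy) * real (card Cx))" for f
  proof -
    have "pmf (G f) y = (\<Sum>z\<in>Cx. indicator (permutations_of_multiset (mset (f z))) y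
            / real (card (permutations_of_multiset (mset (f z))))) / card Cx"
      unfolding G_def pmf_bind using fCx by (simp add: integral_pmf_of_set)
    also have "(\<Sum>z\<in>Cx. indicator (permutations_of_multiset (mset (f z))) y
            / real (card (permutations_of_multiset (mset (f z)))))
        = (\<Sum>z\<in>Cx. if mset (f z) = mset y then 1 / real (card Cy) else 0)"
      by (rule sum.cong) (auto simp: indicator_def Cy_def dest: permutations_of_multisetD intro: permutations_of_multisetI)
    also have "\<dots> = real (card (A f)) * (1 / real (card Cy))"
      unfolding A_def using fCx by (simp add: sum.If_cases Int_def)
    finally show ?thesis by simp
  qed
  have LHS: "measure_pmf.prob (permuted_random_map n m F) {g. g x = y}
      = measure_pmf.expectation F (\<lambda>f. real (card (A f))) / (real (card Cy) * real (card Cx))"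
    unfolding step1 step2' pmf_bind pG by simp
  have JS: "measure_pmf.expectation F (\<lambda>f. joint_spectrum n f (seq_type x) (seq_type y))
      = measure_pmf.expectation F (\<lambda>f. real (card (A f))) / real CARD('a) ^ n"
  proof -
    have "measure_pmf.expectation F (\<lambda>f. joint_spectrum n f (seq_type x) (seq_type y))
       = measure_pmf.expectation F (\<lambda>f. real (card (A f)) / real CARD('a) ^ n)"
    proof (rule integral_cong_AE)
      show "AE f in measure_pmf F. joint_spectrum n f (seq_type x) (seq_type y) = real (card (A f)) / real CARD('a) ^ n"
      proof (rule AE_pmfI)
        fix f assume f: "f \<in> set_pmf F"
        have "{z. length z = n \<and> seq_type z = seq_type x \<and> seq_type (f z) = seq_type y} = A f"
        proof (intro equalityI subsetI)
          fix z assume "z \<in> {z. length z = n \<and> seq_type z = seq_type x \<and> seq_type (f z) = seq_type y}"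
          hence z: "length z = n" "seq_type z = seq_type x" "seq_type (f z) = seq_type y" by auto
          have "length (f z) = m" using hF f z by blast
          thus "z \<in> A f" using z seq_type_eq_iff[OF z(1) assms(4) assms(1)]
              seq_type_eq_iff[of "f z" m y] assms unfolding A_def Cx_def
            by (auto intro: permutations_of_multisetI)
        next
          fix z assume "z \<in> A f"
          hence z: "z \<in> Cx" "mset (f z) = mset y" unfolding A_def by auto
          have lz: "length z = n" using lenCx z by simp
          have "length (f z) = m" using hF f lz by blast
          thus "z \<in> {z. length z = n \<and> seq_type z = seq_type x \<and> seq_type (f z) = seq_type y}"
            using z lz seq_type_eq_iff[OF lz assms(4) assms(1)]
              seq_type_eq_iff[of "f z" m y] assms unfolding Cx_def
            by (auto dest: permutations_of_multisetD)
        qed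
        thus "joint_spectrum n f (seq_type x) (seq_type y) = real (card (A f)) / real CARD('a) ^ n"
          unfolding joint_spectrum_def by simp
      qed
    qed simp_all
    also have "\<dots> = measure_pmf.expectation F (\<lambda>f. real (card (A f))) / real CARD('a) ^ n"
      by (rule integral_divide_zero)
    finally show ?thesis .
  qed
  have TX: "type_multinomial n (seq_type x) = real (card Cx)"
    unfolding Cx_def using type_multinomial_eq[OF assms(4) assms(1)] .
  have TY: "type_multinomial m (seq_type y) = real (card Cy)"
    unfolding Cy_def using type_multinomial_eq[OF assms(5) assms(2)] .
  have Xp: "real CARD('a) ^ n > 0" by simp
  have Yp: "real CARD('b) ^ m > 0" by simp
  have cxp: "real (card Cx) > 0" using fCx by (simp add: card_gt_0_iff)
  have cyp: "real (card Cy) > 0" using fCy by (simp add: card_gt_0_iff)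
  show ?thesis
    unfolding LHS alpha_def JS TX TY
    using Xp Yp cxp cyp by (simp add: field_simps)
qed

end
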